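(* Let $(\Theta_\delta)_{\delta>0}$ be open subsets of $\Omega$ and $u_\delta\in H^1(\Theta_\delta;\mathbb R^d)$ with $\|\nabla u_\delta\|_{L^\infty(\Theta_\delta)}\le\delta^{-1/4}$. Then, with $y_\delta:=\mathrm{id}+\delta u_\delta$, $$\lim_{\delta\to0}\Big|\frac1{\delta^2}\int_{\Theta_\delta}W(\nabla y_\delta)\,dx-\frac12\int_{\Theta_\delta}\mathcal Q(e(u_\delta))\,dx\Big|=0.$$
   Context: $d\in\{2,3\}$, $\Omega\subset\mathbb R^d$ a bounded Lipschitz domain. $W:\mathbb R^{d\times d}\to[0,\infty)$ satisfies $W(RF)=W(F)$ for $R\in SO(d)$, $\{W=0\}=SO(d)$, $W\in C^3$ in a neighborhood of $SO(d)$, $W(F)\ge c\,\mathrm{dist}^2(F,SO(d))$ for some $c>0$. $\mathcal Q(F):=D^2W(\mathrm{Id})F:F$, $e(u)=\frac12(\nabla u+\nabla u^T)$. *)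

theory Defs
  imports "HOL-Analysis.Analysis"
begin

text \<open>Special orthogonal group SO(d), matrices as rows: F $ i $ j.\<close>
definition SOd :: "(real^'n^'n) set" where
  "SOd = {R. orthogonal_matrix R \<and> det R = 1}"

definition C3_on :: "(real^'n^'n) set \<Rightarrow> (real^'n^'n \<Rightarrow> real) \<Rightarrow> bool" where
  "C3_on U W \<longleftrightarrow> (\<exists>D1 D2 D3.
     (\<forall>x\<in>U. (W has_derivative blinfun_apply (D1 x)) (at x)) \<and>
     (\<forall>x\<in>U. (D1 has_derivative blinfun_apply (D2 x)) (at x)) \<and>
     (\<forall>x\<in>U. (D2 has_derivative blinfun_apply (D3 x)) (at x)) \<and>
     continuous_on U D3)"

text \<open>Q(F) = D^2 W(Id) F : F, the second Frechet derivative of W at the identity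
  applied twice to F.\<close>
definition Qform :: "(real^'n^'n \<Rightarrow> real) \<Rightarrow> real^'n^'n \<Rightarrow> real" where
  "Qform W F = blinfun_apply
     (frechet_derivative (\<lambda>G. Blinfun (frechet_derivative W (at G))) (at (mat 1)) F) F"

definition symp :: "real^'n^'n \<Rightarrow> real^'n^'n" where
  "symp G = (1/2) *\<^sub>R (G + transpose G)"

text \<open>Bounded Lipschitz domain: open, bounded, connected, and locally (after a rigid
  motion) the strict subgraph of a Lipschitz function of the remaining coordinates.\<close>
definition lipschitz_domain :: "(real^'n) set \<Rightarrow> bool" where
  "lipschitz_domain \<Omega> \<longleftrightarrow> open \<Omega> \<and> bounded \<Omega> \<and> connected \<Omega> \<and> \<Omega> \<noteq> {} \<and>
    (\<forall>p\<in>frontier \<Omega>. \<exists>r>0. \<exists>R::real^'n^'n. \<exists>k. \<exists>g::real^'n \<Rightarrow> real. \<exists>L.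
       orthogonal_matrix R \<and> L-lipschitz_on UNIV g \<and>
       (\<forall>z z'. (\<forall>i. i \<noteq> k \<longrightarrow> z $ i = z' $ i) \<longrightarrow> g z = g z') \<and>
       \<Omega> \<inter> ball p r = {x \<in> ball p r. (R *v (x - p)) $ k < g (R *v (x - p))})"

fun Ck :: "nat \<Rightarrow> (real^'n \<Rightarrow> real) \<Rightarrow> bool" where
  "Ck 0 f = continuous_on UNIV f"
| "Ck (Suc k) f = (\<exists>g. (\<forall>x. (f has_derivative (\<lambda>h. g x \<bullet> h)) (at x)) \<and>
                      (\<forall>i. Ck k (\<lambda>x. g x $ i)))"

definition test_fun :: "(real^'n) set \<Rightarrow> (real^'n \<Rightarrow> real) \<Rightarrow> bool" where
  "test_fun \<Theta> \<phi> \<longleftrightarrow> (\<forall>k. Ck k \<phi>) \<and> compact (closure {x. \<phi> x \<noteq> 0}) \<and> closure {x. \<phi> x \<noteq> 0} \<subseteq> \<Theta>"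

text \<open>u \<in> H^1(\<Theta>;R^d) with weak gradient Du, (Du x) $ i $ j = \<partial>_j u_i.\<close>
definition H1_on :: "(real^'n) set \<Rightarrow> (real^'n \<Rightarrow> real^'n) \<Rightarrow> (real^'n \<Rightarrow> real^'n^'n) \<Rightarrow> bool" where
  "H1_on \<Theta> u Du \<longleftrightarrow>
     u \<in> borel_measurable (lebesgue_on \<Theta>) \<and> Du \<in> borel_measurable (lebesgue_on \<Theta>) \<and>
     integrable (lebesgue_on \<Theta>) (\<lambda>x. (norm (u x))\<^sup>2) \<and>
     integrable (lebesgue_on \<Theta>) (\<lambda>x. (norm (Du x))\<^sup>2) \<and>
     (\<forall>\<phi> g i j. test_fun \<Theta> \<phi> \<longrightarrow> (\<forall>x. (\<phi> has_derivative (\<lambda>h. g x \<bullet> h)) (at x)) \<longrightarrow>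
        (\<integral>x. u x $ i * g x $ j \<partial>lebesgue_on \<Theta>) = - (\<integral>x. Du x $ i $ j * \<phi> x \<partial>lebesgue_on \<Theta>))"

end

theory Submission
  imports Defs
begin


lemma le_mult_ge1: "1 \<le> (a::real) \<Longrightarrow> 0 \<le> x \<Longrightarrow> x \<le> a * x"
  using mult_right_mono[of 1 a x] by simp

lemma le_abs_mult: "0 \<le> (x::real) \<Longrightarrow> c * x \<le> \<bar>c\<bar> * x"
  using mult_right_mono[OF abs_ge_self[of c]] by simp

lemma mat_entry_le: "\<bar>(X::real^'n^'m) $ i $ j\<bar> \<le> norm X"
  by (rule norm_bound_component_le_cart[OF Finite_Cartesian_Product.norm_nth_le])

lemma mat_norm_le_sum: "norm (X::real^'n^'m) \<le> (\<Sum>i\<in>UNIV. \<Sum>j\<in>UNIV. \<bar>X $ i $ j\<bar>)"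
proof -
  have "norm X \<le> (\<Sum>i\<in>UNIV. norm (X $ i))" unfolding norm_vec_def by (rule L2_set_le_sum) simp
  also have "\<dots> \<le> (\<Sum>i\<in>UNIV. \<Sum>j\<in>UNIV. \<bar>X $ i $ j\<bar>)" by (intro sum_mono norm_le_l1_cart)
  finally show ?thesis .
qed

lemma mat_norm_le_bound:
  assumes "\<And>i j. \<bar>(X::real^'n^'m) $ i $ j\<bar> \<le> b"
  shows "norm X \<le> real CARD('m) * real CARD('n) * b"
proof -
  have "norm X \<le> (\<Sum>i\<in>(UNIV::'m set). \<Sum>j\<in>(UNIV::'n set). b)"
    by (rule order_trans[OF mat_norm_le_sum]) (intro sum_mono assms)
  then show ?thesis by simp
qed

lemma norm_matmul_le: "norm ((X::real^'n^'n) ** (Y::real^'n^'n)) \<le> real CARD('n)^3 * (norm X * norm Y)"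
proof -
  have "\<bar>(X ** Y) $ i $ j\<bar> \<le> real CARD('n) * (norm X * norm Y)" for i j
  proof -
    have "\<bar>(X ** Y) $ i $ j\<bar> = \<bar>\<Sum>k\<in>UNIV. X $ i $ k * Y $ k $ j\<bar>" by (simp add: matrix_matrix_mult_def)
    also have "\<dots> \<le> (\<Sum>k\<in>UNIV. \<bar>X $ i $ k\<bar> * \<bar>Y $ k $ j\<bar>)" by (rule order_trans[OF sum_abs]) (simp add: abs_mult)
    also have "\<dots> \<le> (\<Sum>k\<in>(UNIV::'n set). norm X * norm Y)"
      by (intro sum_mono mult_mono mat_entry_le) auto
    finally show ?thesis by simp
  qed
  then have "norm (X ** Y) \<le> real CARD('n) * real CARD('n) * (real CARD('n) * (norm X * norm Y))"
    using mat_norm_le_bound[of "X ** Y" "real CARD('n) * (norm X * norm Y)"] by blast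
  then show ?thesis by (simp add: power3_eq_cube mult_ac)
qed

lemma norm_transpose_le: "norm (transpose (X::real^'n^'n)) \<le> real CARD('n)^2 * norm X"
proof -
  have "norm (transpose X) \<le> real CARD('n) * real CARD('n) * norm X"
    by (rule mat_norm_le_bound) (simp add: transpose_def mat_entry_le)
  then show ?thesis by (simp add: power2_eq_square)
qed

lemma norm_orth_le: assumes "orthogonal_matrix (R::real^'n^'n)" shows "norm R \<le> real CARD('n)^2"
proof -
  have "\<bar>R $ i $ j\<bar> \<le> 1" for i j
  proof -
    have "norm (row i R) = 1" using assms orthogonal_matrix_orthonormal_rows by blast
    then show ?thesis by (metis component_le_norm_cart row_def vec_lambda_eta)
  qed
  then have "norm R \<le> real CARD('n) * real CARD('n) * 1" by (rule mat_norm_le_bound)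
  then show ?thesis by (simp add: power2_eq_square)
qed

lemma mm_add_rdistrib: "((X::real^'n^'n) + Y) ** Z = X ** Z + Y ** Z"
  by (simp add: matrix_matrix_mult_def vec_eq_iff sum.distrib algebra_simps)
lemma mm_diff_rdistrib: "((X::real^'n^'n) - Y) ** Z = X ** Z - Y ** Z"
  by (simp add: matrix_matrix_mult_def vec_eq_iff sum_subtractf algebra_simps)
lemma mm_diff_ldistrib: "(Z::real^'n^'n) ** (X - Y) = Z ** X - Z ** Y"
  by (simp add: matrix_matrix_mult_def vec_eq_iff sum_subtractf algebra_simps)
lemma mm_scale_left: "((c::real) *\<^sub>R (X::real^'n^'n)) ** Y = c *\<^sub>R (X ** Y)"
  by (simp add: matrix_matrix_mult_def vec_eq_iff sum_distrib_left algebra_simps)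
lemma mm_scale_right: "(X::real^'n^'n) ** ((c::real) *\<^sub>R Y) = c *\<^sub>R (X ** Y)"
  by (simp add: matrix_matrix_mult_def vec_eq_iff sum_distrib_left algebra_simps)

lemma transpose_add: "transpose ((X::real^'n^'n) + Y) = transpose X + transpose Y"
  by (simp add: transpose_def vec_eq_iff)

lemma transpose_diff: "transpose ((X::real^'n^'n) - Y) = transpose X - transpose Y"
  by (simp add: transpose_def vec_eq_iff)

lemma mv_scale: "((c::real) *\<^sub>R (X::real^'n^'n)) *v x = c *\<^sub>R (X *v x)"
  by (simp add: matrix_vector_mult_def vec_eq_iff sum_distrib_left algebra_simps)

lemma skew_inj:
  fixes A :: "real^'n^'n"
  assumes sk: "transpose A = - A"
  shows "\<forall>x. (mat 1 + c *\<^sub>R A) *v x = 0 \<longrightarrow> x = 0"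
proof (intro allI impI)
  fix x :: "real^'n" assume h: "(mat 1 + c *\<^sub>R A) *v x = 0"
  have xx: "x \<bullet> (A *v x) = 0"
  proof -
    have "x \<bullet> (A *v x) = (x v* A) \<bullet> x" by (rule dot_lmul_matrix[symmetric])
    also have "x v* A = transpose A *v x" by simp
    also have "\<dots> = - (A *v x)" using sk by (simp add: matrix_vector_mult_def vec_eq_iff sum_negf)
    finally show ?thesis by (simp add: inner_commute)
  qed
  have "0 = x \<bullet> ((mat 1 + c *\<^sub>R A) *v x)" using h by simp
  also have "\<dots> = x \<bullet> x + c * (x \<bullet> (A *v x))"
    by (simp add: matrix_vector_mult_add_rdistrib mv_scale inner_add_right)
  also have "\<dots> = x \<bullet> x" using xx by simp
  finally show "x = 0" by simp
qed

lemma mat1_SOd: "mat 1 \<in> SOd"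
  by (simp add: SOd_def orthogonal_matrix_def)

lemma cayley:
  "\<exists>K. \<forall>G::real^'n^'n. norm G \<le> 1 \<longrightarrow>
     (\<exists>R\<in>SOd. norm (R ** (mat 1 + G) - (mat 1 + symp G)) \<le> K * (norm G)^2)"
proof -
  define N where "N = real CARD('n)"
  have N1: "N \<ge> 1" unfolding N_def by (simp add: Suc_leI)
  define c where "c = N^3"
  define e1 where "e1 = c * c * N^6"
  have c0: "c \<ge> 0" "e1 \<ge> 0" unfolding c_def e1_def using N1 by auto
  have mm: "norm (X ** Y) \<le> c * (norm X * norm Y)" for X Y :: "real^'n^'n"
    unfolding c_def N_def by (rule norm_matmul_le)
  show ?thesis
  proof (intro exI allI impI)
    fix G :: "real^'n^'n" assume G1: "norm G \<le> 1"
    define g where "g = norm G"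
    have g0: "g \<ge> 0" "g \<le> 1" using G1 by (auto simp: g_def)
    define A where "A = (1/2) *\<^sub>R (G - transpose G)"
    have skA: "transpose A = - A" by (simp add: A_def transpose_def vec_eq_iff field_simps)
    define P where "P = mat 1 + (1/2) *\<^sub>R A"
    define Pm where "Pm = mat 1 + (-1/2) *\<^sub>R A"
    have tP: "transpose P = Pm" by (simp add: P_def Pm_def transpose_add transpose_diff transpose_scalar skA)
    have tPm: "transpose Pm = P" by (simp add: P_def Pm_def transpose_add transpose_diff transpose_scalar skA)
    obtain B where BP: "B ** P = mat 1"
      using skew_inj[OF skA, of "1/2"] matrix_left_invertible_ker[of P] unfolding P_def by blast
    have PB: "P ** B = mat 1" using BP matrix_left_right_inverse by blast
    define R where "R = Pm ** B"
    have comm: "P ** Pm = Pm ** P"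
      by (simp add: P_def Pm_def matrix_add_ldistrib mm_add_rdistrib mm_diff_ldistrib mm_diff_rdistrib mm_scale_left mm_scale_right algebra_simps)
    have tR: "transpose R = transpose B ** P" by (simp add: R_def matrix_transpose_mul tPm)
    have BtPm: "transpose B ** Pm = mat 1"
      using arg_cong[OF PB, of transpose] by (simp add: matrix_transpose_mul tP)
    have "transpose R ** R = transpose B ** (P ** Pm) ** B" unfolding tR by (simp add: R_def matrix_mul_assoc)
    also have "\<dots> = (transpose B ** Pm) ** (P ** B)" by (simp add: comm matrix_mul_assoc)
    also have "\<dots> = mat 1" by (simp add: BtPm PB)
    finally have "orthogonal_matrix R" by (simp add: orthogonal_matrix)
    moreover have "det R = 1"
    proof -
      have "det R = det Pm * det B" by (simp add: R_def det_mul)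
      also have "det Pm = det P" by (metis tP det_transpose)
      also have "det P * det B = 1" by (metis PB det_mul det_I)
      finally show ?thesis .
    qed
    ultimately have RS: "R \<in> SOd" by (simp add: SOd_def)
    have Pm2: "Pm = 2 *\<^sub>R mat 1 - P" by (simp add: P_def Pm_def algebra_simps vec_eq_iff mat_def)
    have R2: "R = 2 *\<^sub>R B - mat 1" by (simp add: R_def Pm2 mm_diff_rdistrib mm_scale_left PB)
    have Bn: "norm B \<le> N^2"
    proof -
      have "B = (1/2) *\<^sub>R (R + mat 1)" using R2 by (simp add: algebra_simps)
      then have "norm B \<le> (1/2) * (norm R + norm (mat 1 :: real^'n^'n))" by (simp add: norm_triangle_ineq)
      also have "\<dots> \<le> (1/2) * (N^2 + N^2)"
        using norm_orth_le[OF \<open>orthogonal_matrix R\<close>] norm_orth_le[of "mat 1 :: real^'n^'n"]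
        by (simp add: N_def orthogonal_matrix_def)
      finally show ?thesis by simp
    qed
    define E1 where "E1 = (1/2) *\<^sub>R ((A ** A) ** B)"
    have RE: "R = (mat 1 - A) + E1"
    proof -
      have "(mat 1 - A) ** P + (1/2) *\<^sub>R (A ** A) = Pm"
        by (simp add: P_def Pm_def matrix_add_ldistrib mm_diff_rdistrib mm_scale_right algebra_simps; simp add: vec_eq_iff)
      then have "((mat 1 - A) ** P + (1/2) *\<^sub>R (A ** A)) ** B = R" by (simp add: R_def)
      then show ?thesis
        by (simp add: E1_def mm_add_rdistrib mm_scale_left matrix_mul_assoc[symmetric] PB)
    qed
    have SA: "symp G = G - A" by (simp add: symp_def A_def algebra_simps; simp add: vec_eq_iff)
    have eq: "R ** (mat 1 + G) - (mat 1 + symp G) = E1 - A ** G + E1 ** G"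
      by (simp add: RE SA matrix_add_ldistrib mm_add_rdistrib mm_diff_rdistrib algebra_simps)
    have An: "norm A \<le> N^2 * g"
    proof -
      have "norm A \<le> (1/2) * (norm G + norm (transpose G))" by (simp add: A_def norm_triangle_ineq4)
      also have "\<dots> \<le> (1/2) * (N^2 * g + N^2 * g)"
      proof -
        have N2: "N^2 \<ge> 1" using N1 by (simp add: one_le_power)
        have "norm G \<le> N^2 * g" using le_mult_ge1[OF N2, of g] g0 by (simp add: g_def)
        moreover have "norm (transpose G) \<le> N^2 * g" using norm_transpose_le[of G] by (simp add: N_def g_def)
        ultimately show ?thesis by (simp add: algebra_simps)
      qed
      finally show ?thesis by (simp add: mult.commute)
    qed
    have AAn: "norm (A ** A) \<le> c * (N^2*g)^2"
    proof -
      have "norm A * norm A \<le> (N^2*g)*(N^2*g)" using An g0 by (intro mult_mono) auto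
      then have "c * (norm A * norm A) \<le> c * ((N^2*g)*(N^2*g))" using c0 by (intro mult_left_mono) auto
      then show ?thesis using mm[of A A] by (simp add: power2_eq_square)
    qed
    have E1n: "norm E1 \<le> e1 * g^2"
    proof -
      have "norm E1 = (1/2) * norm ((A ** A) ** B)" by (simp add: E1_def)
      also have "\<dots> \<le> (1/2) * (c * (norm (A ** A) * norm B))" using mm by simp
      also have "\<dots> \<le> (1/2) * (c * ((c * (N^2*g)^2) * N^2))"
        using AAn Bn c0 by (intro mult_left_mono mult_mono) auto
      also have "\<dots> = (1/2) * (e1 * g^2)" unfolding e1_def by algebra
      also have "\<dots> \<le> e1 * g^2" using c0 by simp
      finally show ?thesis .
    qed
    have AGn: "norm (A ** G) \<le> c * N^2 * g^2"
    proof -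
      have "norm (A ** G) \<le> c * (norm A * g)" using mm[of A G] by (simp add: g_def)
      also have "\<dots> \<le> c * (N^2 * g * g)" using An c0 g0 by (intro mult_left_mono mult_right_mono) auto
      finally show ?thesis by (simp add: power2_eq_square mult_ac)
    qed
    have EGn: "norm (E1 ** G) \<le> c * e1 * g^2"
    proof -
      have "norm (E1 ** G) \<le> c * (norm E1 * g)" using mm[of E1 G] by (simp add: g_def)
      also have "\<dots> \<le> c * (e1 * g^2 * 1)" using E1n c0 g0 by (intro mult_left_mono mult_mono) auto
      finally show ?thesis by (simp add: mult_ac)
    qed
    have "norm (R ** (mat 1 + G) - (mat 1 + symp G)) \<le> norm E1 + norm (A ** G) + norm (E1 ** G)"
      unfolding eq by (meson norm_triangle_ineq4 norm_triangle_ineq order_trans add_mono order_refl diff_conv_add_uminus)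
    also have "\<dots> \<le> (e1 + c * N^2 + c * e1) * g^2" using E1n AGn EGn by (simp add: algebra_simps)
    finally show "\<exists>R\<in>SOd. norm (R ** (mat 1 + G) - (mat 1 + symp G)) \<le> (e1 + c * N^2 + c * e1) * (norm G)^2"
      using RS g_def by blast
  qed
qed

lemma line_vd:
  assumes "(g has_derivative g') (at (a + t *\<^sub>R v))"
  shows "((\<lambda>s. g (a + s *\<^sub>R v)) has_vector_derivative g' v) (at t)"
proof -
  have l: "((\<lambda>s. a + s *\<^sub>R v) has_derivative (\<lambda>s. s *\<^sub>R v)) (at t)"
    by (auto intro!: derivative_eq_intros)
  have bl: "linear g'" using assms has_derivative_linear by blast
  show ?thesis
    using has_derivative_compose[OF l assms] unfolding has_vector_derivative_def
    by (simp add: linear_cmul[OF bl])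
qed

lemma vd_blin:
  assumes "(B has_vector_derivative B') (at t)"
  shows "((\<lambda>s. blinfun_apply (B s) F) has_vector_derivative blinfun_apply B' F) (at t)"
  using bounded_linear.has_derivative[OF blinfun.bounded_linear_left assms[unfolded has_vector_derivative_def]]
  unfolding has_vector_derivative_def by (simp add: blinfun.scaleR_left)

lemma taylor_W:
  fixes W :: "real^'n^'n \<Rightarrow> real"
  assumes r: "r > 0" "cball (mat 1) r \<subseteq> U"
    and d1: "\<forall>x\<in>U. (W has_derivative blinfun_apply (D1 x)) (at x)"
    and d2: "\<forall>x\<in>U. (D1 has_derivative blinfun_apply (D2 x)) (at x)"
    and d3: "\<forall>x\<in>U. (D2 has_derivative blinfun_apply (D3 x)) (at x)"
    and c3: "continuous_on U D3"
    and nn: "\<forall>F. W F \<ge> 0" and w0: "W (mat 1) = 0"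
  shows "\<exists>C. \<forall>F. norm F \<le> r \<longrightarrow> \<bar>W (mat 1 + F) - (1/2) * blinfun_apply (blinfun_apply (D2 (mat 1)) F) F\<bar> \<le> C * norm F ^ 3"
proof -
  have "compact (D3 ` cball (mat 1) r)"
    by (rule compact_continuous_image[OF continuous_on_subset[OF c3 r(2)]]) simp
  then obtain B3 where B3: "\<And>X. X \<in> cball (mat 1) r \<Longrightarrow> norm (D3 X) \<le> B3"
    using compact_imp_bounded bounded_iff by (metis imageI)
  have I_in: "mat 1 \<in> U" using r by auto
  have D10: "blinfun_apply (D1 (mat 1)) = (\<lambda>h. 0)"
  proof (rule has_derivative_local_min)
    show "(W has_derivative blinfun_apply (D1 (mat 1))) (at (mat 1))" using d1 I_in by blast
    show "\<forall>\<^sub>F y in at (mat 1). W (mat 1) \<le> W y" using nn w0 by simp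
  qed
  show ?thesis
  proof (intro exI allI impI)
    fix F :: "real^'n^'n" assume Fr: "norm F \<le> r"
    have inU: "mat 1 + t *\<^sub>R F \<in> cball (mat 1) r" if "0 \<le> t" "t \<le> 1" for t
    proof -
      have "norm (t *\<^sub>R F) \<le> norm F" using that by (simp add: mult_left_le_one_le)
      then show ?thesis using Fr by (simp add: dist_norm)
    qed
    define diff where "diff = (\<lambda>(m::nat) t. if m = 0 then W (mat 1 + t *\<^sub>R F)
       else if m = 1 then blinfun_apply (D1 (mat 1 + t *\<^sub>R F)) F
       else if m = 2 then blinfun_apply (blinfun_apply (D2 (mat 1 + t *\<^sub>R F)) F) F
       else blinfun_apply (blinfun_apply (blinfun_apply (D3 (mat 1 + t *\<^sub>R F)) F) F) F)"
    have DER: "\<forall>m t. m < 3 \<and> 0 \<le> t \<and> t \<le> 1 \<longrightarrow> DERIV (diff m) t :> diff (Suc m) t"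
    proof (intro allI impI)
      fix m :: nat and t :: real assume h: "m < 3 \<and> 0 \<le> t \<and> t \<le> 1"
      then have xU: "mat 1 + t *\<^sub>R F \<in> U" using inU r by blast
      have "m = 0 \<or> m = 1 \<or> m = 2" using h by auto
      then show "DERIV (diff m) t :> diff (Suc m) t"
      proof (elim disjE)
        assume m: "m = 0"
        have "((\<lambda>s. W (mat 1 + s *\<^sub>R F)) has_vector_derivative blinfun_apply (D1 (mat 1 + t *\<^sub>R F)) F) (at t)"
          by (rule line_vd) (use d1 xU in blast)
        then show ?thesis using m
          by (simp add: diff_def has_real_derivative_iff_has_vector_derivative)
      next
        assume m: "m = 1"
        have "((\<lambda>s. D1 (mat 1 + s *\<^sub>R F)) has_vector_derivative blinfun_apply (D2 (mat 1 + t *\<^sub>R F)) F) (at t)"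
          by (rule line_vd) (use d2 xU in blast)
        from vd_blin[OF this, of F] show ?thesis using m
          by (simp add: diff_def has_real_derivative_iff_has_vector_derivative)
      next
        assume m: "m = 2"
        have "((\<lambda>s. D2 (mat 1 + s *\<^sub>R F)) has_vector_derivative blinfun_apply (D3 (mat 1 + t *\<^sub>R F)) F) (at t)"
          by (rule line_vd) (use d3 xU in blast)
        from vd_blin[OF vd_blin[OF this, of F], of F] show ?thesis using m
          by (simp add: diff_def has_real_derivative_iff_has_vector_derivative numeral_eq_Suc)
      qed
    qed
    obtain t where t: "0 < t" "t < 1"
      and eq: "diff 0 1 = (\<Sum>m<3. diff m 0 / fact m * 1 ^ m) + diff 3 t / fact 3 * 1 ^ 3"
      using Maclaurin[of 1 3 diff "diff 0", OF _ _ refl DER] by auto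
    have "W (mat 1 + F) = (1/2) * blinfun_apply (blinfun_apply (D2 (mat 1)) F) F + diff 3 t / 6"
      using eq by (simp add: diff_def numeral_eq_Suc w0 D10 fact_numeral)
    moreover have "\<bar>diff 3 t\<bar> \<le> B3 * norm F ^ 3"
    proof -
      define X where "X = mat 1 + t *\<^sub>R F"
      have XB: "norm (D3 X) \<le> B3" using B3 inU t X_def by auto
      have "\<bar>diff 3 t\<bar> = norm (blinfun_apply (blinfun_apply (blinfun_apply (D3 X) F) F) F)"
        by (simp add: diff_def X_def)
      also have "\<dots> \<le> norm (blinfun_apply (blinfun_apply (D3 X) F) F) * norm F" by (rule norm_blinfun)
      also have "\<dots> \<le> (norm (blinfun_apply (D3 X) F) * norm F) * norm F"
        by (intro mult_right_mono norm_blinfun) auto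
      also have "\<dots> \<le> ((norm (D3 X) * norm F) * norm F) * norm F"
        by (intro mult_right_mono norm_blinfun) auto
      also have "\<dots> \<le> ((B3 * norm F) * norm F) * norm F"
        by (intro mult_right_mono XB) auto
      finally show ?thesis by (simp add: power3_eq_cube mult_ac)
    qed
    ultimately show "\<bar>W (mat 1 + F) - (1/2) * blinfun_apply (blinfun_apply (D2 (mat 1)) F) F\<bar> \<le> (B3/6) * norm F ^ 3"
      by simp
  qed
qed

lemma Qform_eq:
  fixes W :: "real^'n^'n \<Rightarrow> real"
  assumes U: "open U" "mat 1 \<in> U"
    and d1: "\<forall>x\<in>U. (W has_derivative blinfun_apply (D1 x)) (at x)"
    and d2: "\<forall>x\<in>U. (D1 has_derivative blinfun_apply (D2 x)) (at x)"
  shows "Qform W F = blinfun_apply (blinfun_apply (D2 (mat 1)) F) F"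
proof -
  have eq: "Blinfun (frechet_derivative W (at x)) = D1 x" if "x \<in> U" for x
  proof -
    have "blinfun_apply (D1 x) = frechet_derivative W (at x)"
      using frechet_derivative_at[of W "blinfun_apply (D1 x)" x] d1 that by blast
    then show ?thesis by (metis blinfun_apply_inverse)
  qed
  have "((\<lambda>G. Blinfun (frechet_derivative W (at G))) has_derivative blinfun_apply (D2 (mat 1))) (at (mat 1))"
    by (rule has_derivative_transform_within_open[OF _ U]) (use d2 U eq in auto)
  then have "frechet_derivative (\<lambda>G. Blinfun (frechet_derivative W (at G))) (at (mat 1)) = blinfun_apply (D2 (mat 1))"
    using frechet_derivative_at by metis
  then show ?thesis by (simp add: Qform_def)
qed

lemma norm_symp_le: "norm (symp (X::real^'n^'n)) \<le> real CARD('n)^2 * norm X"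
proof -
  have N1: "real CARD('n) \<ge> 1" by (simp add: Suc_leI)
  have "norm (symp X) \<le> (1/2) * (norm X + norm (transpose X))"
    by (simp add: symp_def norm_triangle_ineq)
  also have "\<dots> \<le> (1/2) * (real CARD('n)^2 * norm X + real CARD('n)^2 * norm X)"
  proof -
    have N2: "real CARD('n)^2 \<ge> 1" using N1 by (simp add: one_le_power)
    have "norm X \<le> real CARD('n)^2 * norm X" using le_mult_ge1[OF N2, of "norm X"] by simp
    then show ?thesis using norm_transpose_le[of X] by (simp add: algebra_simps)
  qed
  finally show ?thesis by (simp add: mult.commute)
qed

lemma symp_scale: "symp (t *\<^sub>R X) = t *\<^sub>R symp (X::real^'n^'n)"
  by (simp add: symp_def transpose_scalar algebra_simps)

lemma bil_bound: "\<bar>blinfun_apply (blinfun_apply (Dq::'a::real_normed_vector \<Rightarrow>\<^sub>L 'a \<Rightarrow>\<^sub>L real) X) Y\<bar> \<le> norm Dq * norm X * norm Y"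
proof -
  have "norm (blinfun_apply (blinfun_apply Dq X) Y) \<le> norm (blinfun_apply Dq X) * norm Y" by (rule norm_blinfun)
  also have "\<dots> \<le> norm Dq * norm X * norm Y" by (intro mult_right_mono norm_blinfun) auto
  finally show ?thesis by simp
qed



lemma tri3: "\<bar>w1 - (1/2) * q1\<bar> \<le> (a::real) \<Longrightarrow> \<bar>w2 - (1/2) * q2\<bar> \<le> (b::real) \<Longrightarrow> \<bar>q2 - q3\<bar> \<le> (c::real)
   \<Longrightarrow> (w1::real) = w2 \<Longrightarrow> \<bar>(q1::real) - q3\<bar> \<le> 2 * (a + b) + c"
  by (simp add: abs_le_iff)

lemma q_sym:
  fixes W :: "real^'n^'n \<Rightarrow> real" and Dq :: "(real^'n^'n) \<Rightarrow>\<^sub>L ((real^'n^'n) \<Rightarrow>\<^sub>L real)"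
  assumes r: "r > 0"
    and tay: "\<forall>F. norm F \<le> r \<longrightarrow> \<bar>W (mat 1 + F) - (1/2) * blinfun_apply (blinfun_apply Dq F) F\<bar> \<le> C * norm F ^ 3"
    and frame: "\<forall>R F. R \<in> SOd \<longrightarrow> W (R ** F) = W F"
  shows "blinfun_apply (blinfun_apply Dq G) G = blinfun_apply (blinfun_apply Dq (symp G)) (symp G)"
proof -
  define q where "q = (\<lambda>X. blinfun_apply (blinfun_apply Dq X) X)"
  obtain K where K: "\<And>G::real^'n^'n. norm G \<le> 1 \<Longrightarrow>
     (\<exists>R\<in>SOd. norm (R ** (mat 1 + G) - (mat 1 + symp G)) \<le> K * (norm G)^2)"
    using cayley by blast
  define N where "N = real CARD('n)"
  have N1: "N \<ge> 1" unfolding N_def by (simp add: Suc_leI)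
  define K' where "K' = \<bar>K\<bar>"
  have K'0: "K' \<ge> 0" by (simp add: K'_def)
  define C' where "C' = \<bar>C\<bar>"
  have C'0: "C' \<ge> 0" by (simp add: C'_def)
  define b where "b = norm Dq"
  have b0: "b \<ge> 0" by (simp add: b_def)
  define L where "L = N^2 + K'"
  have L1: "L \<ge> 1" using N1 K'0 one_le_power[OF N1, of 2] unfolding L_def by linarith
  define \<rho> where "\<rho> = min 1 (r / L)"
  have \<rho>0: "\<rho> > 0" using r L1 by (simp add: \<rho>_def)
  define M where "M = 2 * (C' + C' * L^3) + b * (2 * N^2 * K' + K'^2)"
  have loc: "\<bar>q X - q (symp X)\<bar> \<le> M * norm X ^ 3" if X: "norm X \<le> \<rho>" for X :: "real^'n^'n"
  proof -
    define x where "x = norm X"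
    have x0: "0 \<le> x" "x \<le> 1" "x \<le> r / L" using X by (auto simp: x_def \<rho>_def)
    have xr: "L * x \<le> r" using x0 L1 by (simp add: field_simps)
    have xr': "x \<le> r" using xr le_mult_ge1[OF L1 x0(1)] by linarith
    obtain R where R: "R \<in> SOd" and RE: "norm (R ** (mat 1 + X) - (mat 1 + symp X)) \<le> K * x^2"
      using K[of X] x0 x_def by auto
    define S where "S = symp X"
    define E where "E = R ** (mat 1 + X) - (mat 1 + S)"
    have En: "norm E \<le> K' * x^2" using RE le_abs_mult[of "x^2" K] unfolding E_def S_def K'_def
      by simp
    have "x^2 \<le> x" using mult_right_mono[OF x0(2) x0(1)] by (simp add: power2_eq_square)
    then have En1: "norm E \<le> K' * x" using En mult_left_mono[OF _ K'0] by (meson order_trans)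
    have Sn: "norm S \<le> N^2 * x" unfolding S_def N_def x_def by (rule norm_symp_le)
    have SEn: "norm (S + E) \<le> L * x"
      using norm_triangle_ineq[of S E] Sn En1 by (simp add: L_def algebra_simps)
    have eqW: "W (mat 1 + X) = W (mat 1 + (S + E))"
      using frame R by (simp add: E_def algebra_simps)
    have t1: "\<bar>W (mat 1 + X) - (1/2) * q X\<bar> \<le> C' * x^3"
      using tay xr' x0 le_abs_mult[of "x^3" C] unfolding q_def x_def C'_def
      by force
    have t2: "\<bar>W (mat 1 + (S + E)) - (1/2) * q (S + E)\<bar> \<le> C' * (L * x)^3"
    proof -
      have "\<bar>W (mat 1 + (S + E)) - (1/2) * q (S + E)\<bar> \<le> C * norm (S + E)^3"
        using tay SEn xr unfolding q_def by auto
      also have "\<dots> \<le> C' * norm (S + E)^3" unfolding C'_def by (simp add: mult_right_mono)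
      also have "\<dots> \<le> C' * (L * x)^3" using SEn C'0 by (intro mult_left_mono power_mono) auto
      finally show ?thesis .
    qed
    have t3: "\<bar>q (S + E) - q S\<bar> \<le> b * (2 * N^2 * K' + K'^2) * x^3"
    proof -
      have "q (S + E) - q S = blinfun_apply (blinfun_apply Dq S) E + blinfun_apply (blinfun_apply Dq E) S
          + blinfun_apply (blinfun_apply Dq E) E"
        by (simp add: q_def blinfun.add_left blinfun.add_right)
      then have "\<bar>q (S + E) - q S\<bar> \<le> b * norm S * norm E + b * norm E * norm S + b * norm E * norm E"
        using bil_bound[of Dq S E] bil_bound[of Dq E S] bil_bound[of Dq E E] unfolding b_def by linarith
      also have "\<dots> \<le> b * (N^2 * x) * (K' * x^2) + b * (K' * x^2) * (N^2 * x) + b * (K' * x^2) * (K' * x)"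
        using Sn En En1 b0 x0 K'0 by (intro add_mono mult_mono mult_nonneg_nonneg) auto
      also have "\<dots> \<le> b * (2 * N^2 * K' + K'^2) * x^3"
        by (simp add: power2_eq_square power3_eq_cube algebra_simps)
      finally show ?thesis .
    qed
    have "\<bar>q X - q S\<bar> \<le> 2 * (C' * x^3 + C' * (L * x)^3) + b * (2 * N^2 * K' + K'^2) * x^3"
      using tri3[OF t1 t2 t3 eqW] .
    also have "\<dots> = M * x^3" by (simp add: M_def power_mult_distrib algebra_simps)
    finally show ?thesis by (simp add: S_def x_def)
  qed
  define d where "d = \<bar>q G - q (symp G)\<bar>"
  define g where "g = norm G"
  have hom: "q (t *\<^sub>R X) = t^2 * q X" for t X
    by (simp add: q_def blinfun.scaleR_left blinfun.scaleR_right power2_eq_square)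
  have ev: "eventually (\<lambda>t. d \<le> M * g^3 * t) (at_right (0::real))"
  proof -
    have "eventually (\<lambda>t. 0 < t \<and> t < \<rho> / (g + 1)) (at_right (0::real))"
      using \<rho>0 by (intro eventually_conj eventually_at_right_less) (auto simp: eventually_at_right g_def intro!: exI[of _ "\<rho> / (g+1)"] divide_pos_pos add_nonneg_pos)
    then show ?thesis
    proof (rule eventually_mono)
      fix t :: real assume t: "0 < t \<and> t < \<rho> / (g + 1)"
      have g0: "g \<ge> 0" by (simp add: g_def)
      have "norm (t *\<^sub>R G) = t * g" using t by (simp add: g_def)
      also have "\<dots> \<le> t * (g + 1)" using t by simp
      also have "\<dots> \<le> \<rho>" using t g0 by (simp add: field_simps)
      finally have "\<bar>q (t *\<^sub>R G) - q (symp (t *\<^sub>R G))\<bar> \<le> M * norm (t *\<^sub>R G) ^ 3" by (rule loc)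
      then have "t^2 * d \<le> M * (t * g)^3"
        using t by (simp add: hom symp_scale d_def g_def abs_mult right_diff_distrib[symmetric])
      then have "t^2 * d \<le> t^2 * (M * g^3 * t)" by (simp add: power_mult_distrib power3_eq_cube power2_eq_square mult_ac)
      then show "d \<le> M * g^3 * t" using t by (simp add: mult_le_cancel_left)
    qed
  qed
  have lim: "((\<lambda>t. M * g^3 * t) \<longlongrightarrow> 0) (at_right (0::real))"
    by (intro tendsto_eq_intros) auto
  have "d \<le> 0" using tendsto_lowerbound[OF lim ev] by simp
  then show ?thesis by (simp add: d_def q_def)
qed



lemma meas_AE_lebesgue_on:
  fixes f g :: "'a::euclidean_space \<Rightarrow> real"
  assumes S: "S \<in> sets lebesgue" and f: "f \<in> borel_measurable (lebesgue_on S)"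
    and ae: "AE x in lebesgue_on S. f x = g x"
  shows "g \<in> borel_measurable (lebesgue_on S)"
proof -
  have fm: "f measurable_on S" using f S measurable_on_iff_borel_measurable by blast
  have "AE x in lebesgue. x \<in> S \<longrightarrow> f x = g x"
    using ae S by (simp add: AE_restrict_space_iff)
  then obtain N where N: "N \<in> null_sets lebesgue" "\<And>x. x \<notin> N \<Longrightarrow> x \<in> S \<longrightarrow> f x = g x"
    unfolding completion.AE_iff_null_sets by auto
  have "g measurable_on S"
    by (rule measurable_on_spike[OF fm, of N]) (use N negligible_iff_null_sets in auto)
  then show ?thesis using S measurable_on_iff_borel_measurable by blast
qed

lemma bil_bound_le:
  assumes "norm X \<le> a" "norm Y \<le> b"
  shows "\<bar>blinfun_apply (blinfun_apply (Dq::'a::real_normed_vector \<Rightarrow>\<^sub>L 'a \<Rightarrow>\<^sub>L real) X) Y\<bar> \<le> norm Dq * a * b"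
proof -
  have a0: "0 \<le> a" using assms(1) norm_ge_zero order_trans by blast
  have "norm Dq * norm X \<le> norm Dq * a" using assms by (intro mult_left_mono) auto
  then have "norm Dq * norm X * norm Y \<le> norm Dq * a * b"
    using assms a0 by (intro mult_mono) auto
  then show ?thesis using bil_bound[of Dq X Y] by linarith
qed

lemma int_bound_AE:
  fixes f :: "'a \<Rightarrow> real"
  assumes fm: "finite_measure M" and f: "integrable M f" and b: "AE x in M. \<bar>f x\<bar> \<le> K"
  shows "\<bar>\<integral>x. f x \<partial>M\<bar> \<le> K * measure M (space M)"
proof -
  interpret finite_measure M by (rule fm)
  have "\<bar>\<integral>x. f x \<partial>M\<bar> \<le> (\<integral>x. \<bar>f x\<bar> \<partial>M)" using integral_norm_bound[of M f] by simp
  also have "\<dots> \<le> (\<integral>x. K \<partial>M)"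
    by (rule integral_mono_AE) (use f b in auto)
  also have "\<dots> = K * measure M (space M)" by simp
  finally show ?thesis .
qed

theorem lemma3p12:
  fixes W :: "real^'n^'n \<Rightarrow> real" and \<Omega> :: "(real^'n) set"
    and \<Theta> :: "real \<Rightarrow> (real^'n) set" and u :: "real \<Rightarrow> real^'n \<Rightarrow> real^'n"
    and Du :: "real \<Rightarrow> real^'n \<Rightarrow> real^'n^'n"
  assumes dim: "CARD('n) = 2 \<or> CARD('n) = 3"
    and dom: "lipschitz_domain \<Omega>"
    and W_nonneg: "\<forall>F. W F \<ge> 0"
    and W_frame: "\<forall>R F. R \<in> SOd \<longrightarrow> W (R ** F) = W F"
    and W_zero: "{F. W F = 0} = SOd"
    and W_C3: "\<exists>U. open U \<and> SOd \<subseteq> U \<and> C3_on U W"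
    and W_coerc: "\<exists>c>0. \<forall>F. W F \<ge> c * (infdist F SOd)\<^sup>2"
    and Theta: "\<forall>\<delta>>0. open (\<Theta> \<delta>) \<and> \<Theta> \<delta> \<subseteq> \<Omega>"
    and H1: "\<forall>\<delta>>0. H1_on (\<Theta> \<delta>) (u \<delta>) (Du \<delta>)"
    and Linf: "\<forall>\<delta>>0. AE x in lebesgue_on (\<Theta> \<delta>). norm (Du \<delta> x) \<le> \<delta> powr (-1/4)"
  shows "((\<lambda>\<delta>. \<bar>(1 / \<delta>\<^sup>2) * (\<integral>x. W (mat 1 + \<delta> *\<^sub>R Du \<delta> x) \<partial>lebesgue_on (\<Theta> \<delta>))
              - (1/2) * (\<integral>x. Qform W (symp (Du \<delta> x)) \<partial>lebesgue_on (\<Theta> \<delta>))\<bar>)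
          \<longlongrightarrow> 0) (at_right 0)"
proof -
  obtain U where U: "open U" "SOd \<subseteq> U" "C3_on U W" using W_C3 by blast
  then obtain D1 D2 D3 where
    d1: "\<forall>x\<in>U. (W has_derivative blinfun_apply (D1 x)) (at x)" and
    d2: "\<forall>x\<in>U. (D1 has_derivative blinfun_apply (D2 x)) (at x)" and
    d3: "\<forall>x\<in>U. (D2 has_derivative blinfun_apply (D3 x)) (at x)" and
    c3: "continuous_on U D3"
    unfolding C3_on_def by blast
  have I_U: "mat 1 \<in> U" using U(2) mat1_SOd by blast
  obtain r where r: "r > 0" "cball (mat 1) r \<subseteq> U" using open_contains_cball U(1) I_U by blast
  have W0: "W (mat 1) = 0" using W_zero mat1_SOd by blast
  obtain C where tay: "\<forall>F. norm F \<le> r \<longrightarrow> \<bar>W (mat 1 + F) - (1/2) * blinfun_apply (blinfun_apply (D2 (mat 1)) F) F\<bar> \<le> C * norm F ^ 3"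
    using taylor_W[OF r d1 d2 d3 c3 W_nonneg W0] by blast
  define Dq where "Dq = D2 (mat 1)"
  have Qf: "Qform W (symp G) = blinfun_apply (blinfun_apply Dq G) G" for G
    using Qform_eq[OF U(1) I_U d1 d2, of "symp G"] q_sym[OF r(1) tay W_frame, of G] by (simp add: Dq_def)
  define C' where "C' = \<bar>C\<bar>"
  have C'0: "C' \<ge> 0" by (simp add: C'_def)
  have tay': "\<bar>W (mat 1 + F) - (1/2) * blinfun_apply (blinfun_apply Dq F) F\<bar> \<le> C' * norm F ^ 3"
    if "norm F \<le> r" for F
    using tay that le_abs_mult[of "norm F ^ 3" C] by (force simp: Dq_def C'_def)
  have bdO: "bounded \<Omega>" using dom by (simp add: lipschitz_domain_def)
  obtain B0 x0 where B0: "\<Omega> \<subseteq> cball x0 B0" using bdO unfolding bounded_subset_cball by blast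
  define MO where "MO = measure lebesgue (cball (x0::real^'n) B0)"
  have MO0: "MO \<ge> 0" by (simp add: MO_def)
  have Wc: "continuous_on (cball (mat 1) r) W"
  proof (rule continuous_at_imp_continuous_on, rule ballI)
    fix x :: "real^'n^'n" assume "x \<in> cball (mat 1) r"
    then have "x \<in> U" using r(2) by blast
    then show "isCont W x" using d1 has_derivative_continuous by blast
  qed
  have Qc: "continuous_on UNIV (\<lambda>X. blinfun_apply (blinfun_apply Dq X) X)"
    by (intro continuous_intros)
  define ff where "ff = (\<lambda>\<delta>. \<bar>(1 / \<delta>\<^sup>2) * (\<integral>x. W (mat 1 + \<delta> *\<^sub>R Du \<delta> x) \<partial>lebesgue_on (\<Theta> \<delta>))
              - (1/2) * (\<integral>x. Qform W (symp (Du \<delta> x)) \<partial>lebesgue_on (\<Theta> \<delta>))\<bar>)"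
  have lim_e: "((\<lambda>\<delta>::real. \<delta> powr (1/4)) \<longlongrightarrow> 0) (at_right 0)"
  proof -
    have ev0: "eventually (\<lambda>x::real. 0 \<le> x) (at_right 0)"
      using eventually_at_right_less[of "0::real"] by (rule eventually_mono) simp
    show ?thesis using tendsto_zero_powrI[OF tendsto_ident_at tendsto_const ev0, of "1/4"] by simp
  qed
  have ev1: "eventually (\<lambda>\<delta>. (\<delta> powr (1/4))^3 < r) (at_right (0::real))"
    using order_tendstoD(2)[OF tendsto_power[OF lim_e, of 3]] r(1) by simp
  have key: "eventually (\<lambda>\<delta>. ff \<delta> \<le> C' * MO * \<delta> powr (1/4)) (at_right (0::real))"
    using ev1 eventually_at_right_less[of 0]
  proof (eventually_elim)
    case (elim \<delta>)
    then have d0: "\<delta> > 0" and er: "(\<delta> powr (1/4))^3 < r" by auto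
    define e where "e = \<delta> powr (1/4)"
    have e0: "e > 0" using d0 by (simp add: e_def)
    have e4: "e^4 = \<delta>"
    proof -
      have "e^4 = e powr (real 4)" using e0 by (simp add: powr_realpow)
      also have "\<dots> = \<delta>" using d0 by (simp add: e_def powr_powr)
      finally show ?thesis .
    qed
    have dinv: "\<delta> powr (-1/4) = inverse e"
    proof -
      have "\<delta> powr (-1/4) = \<delta> powr (-(1/4))" by simp
      also have "\<dots> = inverse e" by (simp add: powr_minus e_def)
      finally show ?thesis .
    qed
    define T where "T = \<Theta> \<delta>"
    have Topen: "open T" and TO: "T \<subseteq> \<Omega>" using Theta d0 by (auto simp: T_def)
    have Tbd: "bounded T" using TO B0 bounded_cball bounded_subset by blast
    have Tlm: "T \<in> lmeasurable" by (rule lmeasurable_open[OF Tbd Topen])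
    have Tleb: "T \<in> sets lebesgue" using Tlm by (simp add: fmeasurableD)
    have fin: "finite_measure (lebesgue_on T)" by (rule finite_measure_lebesgue_on[OF Tlm])
    have spc: "space (lebesgue_on T) = T" by simp
    have measT: "measure (lebesgue_on T) (space (lebesgue_on T)) \<le> MO"
    proof -
      have "measure (lebesgue_on T) (space (lebesgue_on T)) = measure lebesgue T"
        using Tleb by (simp add: measure_restrict_space)
      also have "\<dots> \<le> MO" unfolding MO_def
        by (rule measure_mono_fmeasurable) (use TO B0 Tleb in auto)
      finally show ?thesis .
    qed
    have Dum: "Du \<delta> \<in> borel_measurable (lebesgue_on T)"
      using H1 d0 by (simp add: H1_on_def T_def)
    have AEb: "AE x in lebesgue_on T. norm (Du \<delta> x) \<le> inverse e"
    proof -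
      have "AE x in lebesgue_on (\<Theta> \<delta>). norm (Du \<delta> x) \<le> \<delta> powr (-1/4)" using Linf d0 by blast
      then show ?thesis unfolding dinv T_def .
    qed
    have pw: "\<bar>(1/\<delta>\<^sup>2) * W (mat 1 + \<delta> *\<^sub>R G) - (1/2) * blinfun_apply (blinfun_apply Dq G) G\<bar> \<le> C' * e
           \<and> norm (\<delta> *\<^sub>R G) \<le> r
           \<and> \<bar>W (mat 1 + \<delta> *\<^sub>R G)\<bar> \<le> (1/2) * norm Dq * r * r + C' * r ^ 3
           \<and> \<bar>blinfun_apply (blinfun_apply Dq G) G\<bar> \<le> norm Dq * inverse e * inverse e"
      if G: "norm G \<le> inverse e" for G
    proof -
      have nG: "norm (\<delta> *\<^sub>R G) \<le> e^3"
      proof -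
        have "norm (\<delta> *\<^sub>R G) = e^4 * norm G" using d0 e4 by simp
        also have "\<dots> \<le> e^4 * inverse e" using G e0 by (intro mult_left_mono) auto
        also have "\<dots> = e^3" using e0 by (simp add: field_simps eval_nat_numeral)
        finally show ?thesis .
      qed
      have nGr: "norm (\<delta> *\<^sub>R G) \<le> r" using nG er e_def by simp
      have T1: "\<bar>W (mat 1 + \<delta> *\<^sub>R G) - (1/2) * blinfun_apply (blinfun_apply Dq (\<delta> *\<^sub>R G)) (\<delta> *\<^sub>R G)\<bar> \<le> C' * norm (\<delta> *\<^sub>R G) ^ 3"
        by (rule tay'[OF nGr])
      have hom: "blinfun_apply (blinfun_apply Dq (\<delta> *\<^sub>R G)) (\<delta> *\<^sub>R G) = \<delta>\<^sup>2 * blinfun_apply (blinfun_apply Dq G) G"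
        by (simp add: blinfun.scaleR_left blinfun.scaleR_right power2_eq_square)
      have c3b: "C' * norm (\<delta> *\<^sub>R G) ^ 3 \<le> C' * (e^3)^3"
        using nG C'0 by (intro mult_left_mono power_mono) auto
      have "\<bar>(1/\<delta>\<^sup>2) * W (mat 1 + \<delta> *\<^sub>R G) - (1/2) * blinfun_apply (blinfun_apply Dq G) G\<bar>
          = (1/\<delta>\<^sup>2) * \<bar>W (mat 1 + \<delta> *\<^sub>R G) - (1/2) * blinfun_apply (blinfun_apply Dq (\<delta> *\<^sub>R G)) (\<delta> *\<^sub>R G)\<bar>"
        using d0 by (simp add: hom abs_mult field_simps)
      also have "\<dots> \<le> (1/\<delta>\<^sup>2) * (C' * (e^3)^3)"
        using T1 c3b d0 by (intro mult_left_mono) auto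
      also have "\<dots> = C' * e" using e0 by (simp add: e4[symmetric] field_simps eval_nat_numeral)
      finally have P1: "\<bar>(1/\<delta>\<^sup>2) * W (mat 1 + \<delta> *\<^sub>R G) - (1/2) * blinfun_apply (blinfun_apply Dq G) G\<bar> \<le> C' * e" .
      have P3a: "\<bar>blinfun_apply (blinfun_apply Dq (\<delta> *\<^sub>R G)) (\<delta> *\<^sub>R G)\<bar> \<le> norm Dq * r * r"
        by (rule bil_bound_le[OF nGr nGr])
      have P3b: "C' * norm (\<delta> *\<^sub>R G) ^ 3 \<le> C' * r ^ 3"
        using nGr C'0 by (intro mult_left_mono power_mono) auto
      have P3: "\<bar>W (mat 1 + \<delta> *\<^sub>R G)\<bar> \<le> (1/2) * norm Dq * r * r + C' * r ^ 3"
        using T1 P3a P3b by (simp add: abs_le_iff)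
      have P4: "\<bar>blinfun_apply (blinfun_apply Dq G) G\<bar> \<le> norm Dq * inverse e * inverse e"
        by (rule bil_bound_le[OF G G])
      show ?thesis using P1 nGr P3 P4 by blast
    qed
    define h where "h = (\<lambda>x. if norm (\<delta> *\<^sub>R Du \<delta> x) \<le> r then mat 1 + \<delta> *\<^sub>R Du \<delta> x else mat 1)"
    have hm: "h \<in> borel_measurable (lebesgue_on T)"
      unfolding h_def using Dum by measurable
    have hin: "h \<in> space (lebesgue_on T) \<rightarrow> cball (mat 1) r"
      using r(1) by (auto simp: h_def dist_norm)
    have Whm: "(\<lambda>x. W (h x)) \<in> borel_measurable (lebesgue_on T)"
      using measurable_comp[OF measurable_restrict_space2[OF hin hm] borel_measurable_continuous_on_restrict[OF Wc]]
      by (simp add: comp_def)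
    have Wm: "(\<lambda>x. W (mat 1 + \<delta> *\<^sub>R Du \<delta> x)) \<in> borel_measurable (lebesgue_on T)"
    proof (rule meas_AE_lebesgue_on[OF Tleb Whm])
      show "AE x in lebesgue_on T. W (h x) = W (mat 1 + \<delta> *\<^sub>R Du \<delta> x)"
        using AEb by eventually_elim (use pw in \<open>auto simp: h_def\<close>)
    qed
    have Qm: "(\<lambda>x. Qform W (symp (Du \<delta> x))) \<in> borel_measurable (lebesgue_on T)"
      unfolding Qf using borel_measurable_continuous_on[OF Qc Dum] .
    have Wi: "integrable (lebesgue_on T) (\<lambda>x. W (mat 1 + \<delta> *\<^sub>R Du \<delta> x))"
    proof (rule finite_measure.integrable_const_bound[OF fin _ Wm])
      show "AE x in lebesgue_on T. norm (W (mat 1 + \<delta> *\<^sub>R Du \<delta> x)) \<le> (1/2) * norm Dq * r * r + C' * r ^ 3"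
        using AEb by eventually_elim (use pw in auto)
    qed
    have Qi: "integrable (lebesgue_on T) (\<lambda>x. Qform W (symp (Du \<delta> x)))"
    proof (rule finite_measure.integrable_const_bound[OF fin _ Qm])
      show "AE x in lebesgue_on T. norm (Qform W (symp (Du \<delta> x))) \<le> norm Dq * inverse e * inverse e"
        using AEb by eventually_elim (use pw in \<open>auto simp: Qf\<close>)
    qed
    have "ff \<delta> = \<bar>\<integral>x. (1/\<delta>\<^sup>2) * W (mat 1 + \<delta> *\<^sub>R Du \<delta> x) - (1/2) * Qform W (symp (Du \<delta> x)) \<partial>lebesgue_on T\<bar>"
      using Wi Qi by (simp add: ff_def T_def)
    also have "\<dots> \<le> C' * e * measure (lebesgue_on T) (space (lebesgue_on T))"
    proof (rule int_bound_AE[OF fin])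
      show "integrable (lebesgue_on T) (\<lambda>x. (1/\<delta>\<^sup>2) * W (mat 1 + \<delta> *\<^sub>R Du \<delta> x) - (1/2) * Qform W (symp (Du \<delta> x)))"
        using Wi Qi by auto
      show "AE x in lebesgue_on T. \<bar>(1/\<delta>\<^sup>2) * W (mat 1 + \<delta> *\<^sub>R Du \<delta> x) - (1/2) * Qform W (symp (Du \<delta> x))\<bar> \<le> C' * e"
        using AEb by eventually_elim (use pw in \<open>auto simp: Qf\<close>)
    qed
    also have "\<dots> \<le> C' * e * MO"
      using measT C'0 e0 by (intro mult_left_mono) auto
    finally show ?case by (simp add: e_def mult_ac)
  qed
  have lim0: "((\<lambda>\<delta>. C' * MO * \<delta> powr (1/4)) \<longlongrightarrow> 0) (at_right (0::real))"
    using tendsto_mult_left[OF lim_e, of "C' * MO"] by simp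
  show ?thesis
    unfolding ff_def[symmetric]
    by (rule tendsto_sandwich[OF _ key tendsto_const lim0]) (simp add: ff_def)
qed

end
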